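(* Let $T$ be a local, translation-invariant stochastic matrix on $\mathbb{Z}\times\{1,\dots,D\}$ with $\det X(k)\ne0$ for all $k\in[-\pi,\pi]$. Suppose the transition-probability distribution is symmetric around displacement $l_0\in\mathbb{Z}$, in the sense that there is a real orthogonal $D\times D$ matrix $M$ with $$\sum_{b,c}M_{a,b}\,T_{j+l_0-l,b;j,c}\,M_{d,c}=T_{j+l_0+l,a;j,d}\quad\text{for all } l\in\mathbb{Z},\ j,\ a,\ d .$$ Then $w(T,0)=-l_0D$.
   Context: States are pairs $(j,a)$, $j\in\mathbb{Z}$, $a\in\{1,\dots,D\}$. A stochastic matrix is a real matrix $T=(T_{i,a;j,b})$ with $T_{i,a;j,b}\ge0$ and $\sum_{i,a}T_{i,a;j,b}=1$ for all $(j,b)$. It is local if there are $C,\ell>0$ with $T_{i,a;j,b}\le Ce^{-|i-j|/\ell}$ for all sufficiently large $|i-j|$, and translation invariant if $T_{i+1,a;j+1,b}=T_{i,a;j,b}$. The Bloch matrix is $X(k)$ with $X_{a,b}(k)=\sum_{l\in\mathbb{Z}}T_{j+l,a;j,b}e^{-ikl}$, $k\in[-\pi,\pi]$, and $w(T,0)=\int_{-\pi}^{\pi}\frac{dk}{2\pi i}\partial_k\log\det X(k)\in\mathbb{Z}$. *)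

theory Defs
  imports "HOL-Analysis.Analysis"
begin

text \<open>States (j,a) with j an integer and a ranging over a finite index type 'n
  standing for {1..D}, D = CARD('n). A matrix on the states is a function
  T :: int => 'n => int => 'n => real, with T i a j b the entry T_{i,a;j,b}.\<close>

definition stochastic :: "(int \<Rightarrow> 'n::finite \<Rightarrow> int \<Rightarrow> 'n \<Rightarrow> real) \<Rightarrow> bool" where
  "stochastic T \<longleftrightarrow> (\<forall>i a j b. T i a j b \<ge> 0) \<and>
     (\<forall>j b. ((\<lambda>(i, a). T i a j b) has_sum 1) (UNIV :: (int \<times> 'n) set))"

definition local_matrix :: "(int \<Rightarrow> 'n::finite \<Rightarrow> int \<Rightarrow> 'n \<Rightarrow> real) \<Rightarrow> bool" where
  "local_matrix T \<longleftrightarrow> (\<exists>C ell. C > 0 \<and> ell > 0 \<and> (\<exists>N. \<forall>i a j b. \<bar>i - j\<bar> \<ge> N \<longrightarrow>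
      T i a j b \<le> C * exp (- real_of_int \<bar>i - j\<bar> / ell)))"

definition translation_invariant :: "(int \<Rightarrow> 'n::finite \<Rightarrow> int \<Rightarrow> 'n \<Rightarrow> real) \<Rightarrow> bool" where
  "translation_invariant T \<longleftrightarrow> (\<forall>i a j b. T (i + 1) a (j + 1) b = T i a j b)"

text \<open>Bloch matrix X(k)_{a,b} = sum_l T_{j+l,a;j,b} e^{-ikl}; by translation invariance
  it is independent of j, and we take j = 0.\<close>
definition bloch :: "(int \<Rightarrow> 'n::finite \<Rightarrow> int \<Rightarrow> 'n \<Rightarrow> real) \<Rightarrow> real \<Rightarrow> complex ^ 'n ^ 'n" where
  "bloch T k = (\<chi> a b. infsum (\<lambda>l::int. complex_of_real (T l a 0 b) *
                                 exp (- \<i> * complex_of_real k * of_int l)) UNIV)"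

text \<open>w(T,0) = int_{-pi}^{pi} dk/(2 pi i) d/dk log det X(k)
   = (1/(2 pi i)) int_{-pi}^{pi} (d/dk det X(k)) / det X(k) dk.\<close>
definition winding_w0 :: "(int \<Rightarrow> 'n::finite \<Rightarrow> int \<Rightarrow> 'n \<Rightarrow> real) \<Rightarrow> complex" where
  "winding_w0 T = integral {-pi..pi}
      (\<lambda>k. vector_derivative (\<lambda>q. det (bloch T q)) (at k) / det (bloch T k)) / (2 * pi * \<i>)"

end

theory Submission
  imports Defs "HOL-Complex_Analysis.Complex_Analysis"
begin

lemma has_sum_sum_fun:
  fixes f :: "'i \<Rightarrow> 'a \<Rightarrow> 'b::{topological_comm_monoid_add, t2_space}"
  assumes "finite I" "\<And>i. i \<in> I \<Longrightarrow> f i summable_on B"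
  shows "((\<lambda>x. \<Sum>i\<in>I. f i x) has_sum (\<Sum>i\<in>I. infsum (f i) B)) B"
  using assms
proof (induction I rule: finite_induct)
  case empty then show ?case by simp
next
  case (insert j I)
  have "((\<lambda>x. f j x + (\<Sum>i\<in>I. f i x)) has_sum (infsum (f j) B + (\<Sum>i\<in>I. infsum (f i) B))) B"
    using insert by (intro has_sum_add) auto
  then show ?case using insert by simp
qed

lemma infsum_sum_fun:
  fixes f :: "'i \<Rightarrow> 'a \<Rightarrow> 'b::{topological_comm_monoid_add, t2_space}"
  assumes "finite I" "\<And>i. i \<in> I \<Longrightarrow> f i summable_on B"
  shows "infsum (\<lambda>x. \<Sum>i\<in>I. f i x) B = (\<Sum>i\<in>I. infsum (f i) B)"
  using has_sum_sum_fun[OF assms] by (rule infsumI)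

lemma int_summable:
  fixes g :: "int \<Rightarrow> real"
  assumes "\<And>l. g l \<ge> 0" "summable (\<lambda>n. g (int n))" "summable (\<lambda>n. g (- int n))"
  shows "g summable_on UNIV"
proof -
  have inj1: "inj_on int UNIV" by (rule inj_onI) simp
  have inj2: "inj_on (\<lambda>n. - int n) UNIV" by (rule inj_onI) simp
  have "(g \<circ> int) summable_on UNIV"
    using summable_on_UNIV_nonneg_real_iff[of "g \<circ> int"] assms(1,2) by (simp add: o_def)
  hence 1: "g summable_on range int" by (simp only: summable_on_reindex[OF inj1])
  have "(g \<circ> (\<lambda>n. - int n)) summable_on UNIV"
    using summable_on_UNIV_nonneg_real_iff[of "g \<circ> (\<lambda>n. - int n)"] assms(1,3) by (simp add: o_def)
  hence 2: "g summable_on range (\<lambda>n. - int n)" by (simp only: summable_on_reindex[OF inj2])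
  have n2: "g summable_on (range (\<lambda>n. - int n) - range int)"
    by (rule summable_on_subset_banach[OF 2]) blast
  have 3: "g summable_on (range int \<union> (range (\<lambda>n. - int n) - range int))"
    by (rule summable_on_Un_disjoint[OF 1 n2]) blast
  have cover: "x \<in> range int \<union> (range (\<lambda>n. - int n) - range int)" for x :: int
  proof (cases "x \<ge> 0")
    case True
    hence "x = int (nat x)" by simp
    thus ?thesis by (metis UNIV_I UnI1 image_eqI)
  next
    case False
    hence "x = - int (nat (- x))" by simp
    hence "x \<in> range (\<lambda>n. - int n)" by (metis UNIV_I image_eqI)
    thus ?thesis by blast
  qed
  have "range int \<union> (range (\<lambda>n. - int n) - range int) = UNIV"
    using cover by blast
  with 3 show ?thesis by simp
qed

lemma exp_bound_summable:
  fixes h :: "nat \<Rightarrow> real"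
  assumes "\<And>n. h n \<ge> 0" "\<And>n. n \<ge> N \<Longrightarrow> h n \<le> K * exp (- c * real n)" "c > 0"
  shows "summable h"
proof (rule summable_comparison_test')
  show "summable (\<lambda>n. K * exp (- c) ^ n)"
    using assms(3) by (intro summable_mult summable_geometric) auto
  fix n assume "n \<ge> N"
  then show "norm (h n) \<le> K * exp (- c) ^ n"
    using assms(1,2)[of n] by (simp add: exp_of_nat_mult[symmetric] mult.commute)
qed

lemma det_scale:
  fixes A :: "'a::comm_ring_1^'n::finite^'n"
  shows "det (\<chi> i j. c * A $ i $ j) = c ^ CARD('n) * det A"
  unfolding det_def
  by (simp add: sum_distrib_left prod.distrib mult_ac)

lemma det_scale':
  fixes f :: "'n::finite \<Rightarrow> 'n \<Rightarrow> 'a::comm_ring_1"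
  shows "det (\<chi> i j. c * f i j) = c ^ CARD('n) * det (\<chi> i j. f i j)"
  unfolding det_def
  by (simp add: sum_distrib_left prod.distrib mult_ac)

lemma det_of_real_mat:
  fixes M :: "real^'n::finite^'n"
  shows "det (\<chi> i j. complex_of_real (M $ i $ j)) = complex_of_real (det M)"
  unfolding det_def by simp

lemma aux_prod:
  fixes e0 e1 x :: complex
  assumes "x = e0 * e1"
  shows "complex_of_real (p * q) * e0 * (complex_of_real t * e1) = complex_of_real (p * t * q) * x"
  using assms by (simp add: mult_ac)

lemma final_alg:
  fixes K I :: complex
  assumes "I = (pi - - pi) *\<^sub>R (- K) - I" "K = 2 * \<i> * of_int l0 * of_nat n"
  shows "I / (2 * complex_of_real pi * \<i>) = - (of_int l0 * of_nat n)"
proof -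
  from assms(1) have "I + I = (pi - - pi) *\<^sub>R (- K)" by (metis diff_add_cancel)
  also have "(pi - - pi) *\<^sub>R (- K) = 2 * (complex_of_real pi * (- K))"
    by (simp add: scaleR_conv_of_real)
  finally have "I = complex_of_real pi * (- K)" by simp
  moreover have "complex_of_real pi \<noteq> 0" using pi_gt_zero by simp
  ultimately show ?thesis using assms(2) by (simp add: field_simps)
qed

theorem mainTheorem8:
  fixes T :: "int \<Rightarrow> 'n::finite \<Rightarrow> int \<Rightarrow> 'n \<Rightarrow> real"
    and l0 :: int
  assumes "stochastic T" and "local_matrix T" and "translation_invariant T"
    and "\<forall>k\<in>{-pi..pi}. det (bloch T k) \<noteq> 0"
    and "\<exists>M :: real ^ 'n ^ 'n. orthogonal_matrix M \<and>
           (\<forall>l j a d. (\<Sum>b\<in>UNIV. \<Sum>c\<in>UNIV. M $ a $ b * T (j + l0 - l) b j c * M $ d $ c)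
                        = T (j + l0 + l) a j d)"
  shows "winding_w0 T = - (of_int l0 * of_nat CARD('n))"
proof -
  have nonneg: "\<And>i a j b. T i a j b \<ge> 0" using assms(1) unfolding stochastic_def by blast
  obtain C ell N where Cpos: "C > 0" and ellpos: "ell > 0" and
    bnd: "\<And>i a j b. \<bar>i - j\<bar> \<ge> N \<Longrightarrow> T i a j b \<le> C * exp (- real_of_int \<bar>i - j\<bar> / ell)"
    using assms(2) unfolding local_matrix_def by blast
  obtain M :: "real^'n^'n" where orthM: "orthogonal_matrix M" and
    sym: "\<And>l j a d. (\<Sum>b\<in>UNIV. \<Sum>c\<in>UNIV. M $ a $ b * T (j + l0 - l) b j c * M $ d $ c)
                        = T (j + l0 + l) a j d"
    using assms(5) by blast
  define \<delta> where "\<delta> = 1 / (2 * ell)"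
  have \<delta>pos: "\<delta> > 0" using ellpos by (simp add: \<delta>_def)
  define S where "S = {z::complex. \<bar>Im z\<bar> < \<delta>}"
  have openS: "open S" unfolding S_def
    by (intro open_Collect_less continuous_intros)
  have Sneg: "- z \<in> S" if "z \<in> S" for z using that by (simp add: S_def)
  have Sreal: "complex_of_real k \<in> S" for k using \<delta>pos by (simp add: S_def)
  define \<tau> where "\<tau> = (\<lambda>a b (l::int) (z::complex). complex_of_real (T l a 0 b) * exp (- \<i> * z * of_int l))"
  define m where "m = (\<lambda>a b (l::int). T l a 0 b * exp (\<delta> * real_of_int \<bar>l\<bar>))"
  have m_nonneg: "m a b l \<ge> 0" for a b l using nonneg by (simp add: m_def)
  have m_decay: "m a b l \<le> C * exp (- \<delta> * real_of_int \<bar>l\<bar>)" if "\<bar>l\<bar> \<ge> N" for a b l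
  proof -
    have "T l a 0 b \<le> C * exp (- real_of_int \<bar>l\<bar> / ell)" using bnd[of l 0] that by simp
    hence "m a b l \<le> C * exp (- real_of_int \<bar>l\<bar> / ell) * exp (\<delta> * real_of_int \<bar>l\<bar>)"
      unfolding m_def by (intro mult_right_mono) auto
    also have "\<dots> = C * exp (- real_of_int \<bar>l\<bar> / ell + \<delta> * real_of_int \<bar>l\<bar>)"
      by (simp only: mult.assoc flip: exp_add)
    also have "- real_of_int \<bar>l\<bar> / ell + \<delta> * real_of_int \<bar>l\<bar> = - \<delta> * real_of_int \<bar>l\<bar>"
      using ellpos by (simp add: \<delta>_def field_simps)
    finally show ?thesis .
  qed
  have m_summ: "m a b summable_on UNIV" for a b
  proof (rule int_summable)
    show "summable (\<lambda>n. m a b (int n))"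
    proof (rule exp_bound_summable[where N="nat N" and K=C and c=\<delta>])
      fix n :: nat assume "nat N \<le> n"
      hence "N \<le> \<bar>int n\<bar>" by linarith
      thus "m a b (int n) \<le> C * exp (- \<delta> * real n)" using m_decay[of "int n"] by simp
    qed (use m_nonneg \<delta>pos in auto)
    show "summable (\<lambda>n. m a b (- int n))"
    proof (rule exp_bound_summable[where N="nat N" and K=C and c=\<delta>])
      fix n :: nat assume "nat N \<le> n"
      hence "N \<le> \<bar>- int n\<bar>" by linarith
      thus "m a b (- int n) \<le> C * exp (- \<delta> * real n)" using m_decay[of "- int n"] by simp
    qed (use m_nonneg \<delta>pos in auto)
  qed (rule m_nonneg)
  have \<tau>_bound: "norm (\<tau> a b l z) \<le> m a b l" if "z \<in> S" for a b l z
  proof -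
    have "norm (\<tau> a b l z) = T l a 0 b * exp (Im z * real_of_int l)"
      using nonneg by (simp add: \<tau>_def norm_mult norm_exp_eq_Re)
    also have "Im z * real_of_int l \<le> \<delta> * real_of_int \<bar>l\<bar>"
    proof -
      have "Im z * real_of_int l \<le> \<bar>Im z\<bar> * real_of_int \<bar>l\<bar>"
        by (metis abs_ge_self abs_mult of_int_abs)
      also have "\<dots> \<le> \<delta> * real_of_int \<bar>l\<bar>"
        using that by (intro mult_right_mono) (auto simp: S_def)
      finally show ?thesis .
    qed
    hence "T l a 0 b * exp (Im z * real_of_int l) \<le> m a b l"
      unfolding m_def using nonneg by (intro mult_left_mono) auto
    finally show ?thesis .
  qed
  have \<tau>_summ: "(\<lambda>l. \<tau> a b l z) summable_on UNIV" if "z \<in> S" for a b z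
  proof -
    have "(\<lambda>l. norm (\<tau> a b l z)) summable_on UNIV"
      by (rule summable_on_comparison_test[OF m_summ]) (use \<tau>_bound that in auto)
    thus ?thesis by (metis abs_summable_summable)
  qed
  define E where "E = (\<lambda>a b z. infsum (\<lambda>l. \<tau> a b l z) UNIV)"
  define Dz where "Dz = (\<lambda>z. det (\<chi> a b. E a b z))"
  have bloch_eq: "bloch T k = (\<chi> a b. E a b (complex_of_real k))" for k
    unfolding bloch_def E_def \<tau>_def by simp
  have Ehol: "E a b holomorphic_on S" for a b
  proof -
    have ulim: "uniform_limit S (\<lambda>X y. \<Sum>l\<in>X. \<tau> a b l y) (\<lambda>y. \<Sum>\<^sub>\<infinity>l\<in>UNIV. \<tau> a b l y)
                  (finite_subsets_at_top UNIV)"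
      by (rule Weierstrass_m_test_general[OF _ m_summ]) (use \<tau>_bound in auto)
    have "E a b field_differentiable at z0" if z0: "z0 \<in> S" for z0
    proof -
      obtain r where r: "r > 0" "cball z0 r \<subseteq> S"
        using openS z0 open_contains_cball by blast
      have ul2: "uniform_limit (cball z0 r) (\<lambda>X y. \<Sum>l\<in>X. \<tau> a b l y) (E a b)
                  (finite_subsets_at_top UNIV)"
        unfolding E_def by (rule uniform_limit_on_subset[OF ulim r(2)])
      have ev: "\<forall>\<^sub>F X in finite_subsets_at_top UNIV.
          continuous_on (cball z0 r) (\<lambda>y. \<Sum>l\<in>X. \<tau> a b l y) \<and>
          (\<lambda>y. \<Sum>l\<in>X. \<tau> a b l y) holomorphic_on ball z0 r"
        by (intro always_eventually allI conjI)
           (unfold \<tau>_def, (intro continuous_intros holomorphic_intros)+)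
      obtain "E a b holomorphic_on ball z0 r"
        using holomorphic_uniform_limit[OF ev ul2] by auto
      thus ?thesis using r(1) holomorphic_on_imp_differentiable_at by auto
    qed
    thus ?thesis unfolding holomorphic_on_def
      using field_differentiable_at_within by blast
  qed
  have Dz_eq: "Dz = (\<lambda>z. \<Sum>p\<in>{p. p permutes (UNIV::'n set)}. of_int (sign p) * (\<Prod>i\<in>UNIV. E i (p i) z))"
    unfolding Dz_def det_def by simp
  have Dhol: "Dz holomorphic_on S"
    unfolding Dz_eq by (intro holomorphic_intros Ehol)

  have Ediff: "\<And>a b z. z \<in> S \<Longrightarrow> E a b field_differentiable at z"
    using Ehol openS holomorphic_on_imp_differentiable_at by blast
  have entry: "exp (\<i> * z * of_int l0) * E a d z =
      (\<Sum>c\<in>UNIV. (\<Sum>b\<in>UNIV. complex_of_real (M $ a $ b) * (exp (- \<i> * z * of_int l0) * E b c (- z)))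
         * complex_of_real (M $ d $ c))" if zS: "z \<in> S" for z a d
  proof -
    define G where "G = (\<lambda>l. \<Sum>c\<in>UNIV. \<Sum>b\<in>UNIV.
        complex_of_real (M $ a $ b * M $ d $ c) * exp (- \<i> * z * of_int l0) * \<tau> b c l (- z))"
    have summ1: "(\<lambda>l. complex_of_real (M $ a $ b * M $ d $ c) * exp (- \<i> * z * of_int l0) * \<tau> b c l (- z))
        summable_on UNIV" for b c
      using \<tau>_summ[OF Sneg[OF zS], of b c] summable_on_cmult_right by blast
    have summ2: "(\<lambda>l. \<Sum>b\<in>UNIV. complex_of_real (M $ a $ b * M $ d $ c) * exp (- \<i> * z * of_int l0) * \<tau> b c l (- z))
        summable_on UNIV" for c
      apply (rule has_sum_imp_summable[OF has_sum_sum_fun])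
       apply simp
      apply (rule summ1)
      done
    have "exp (\<i> * z * of_int l0) * E a d z = infsum (\<lambda>l. exp (\<i> * z * of_int l0) * \<tau> a d l z) UNIV"
      unfolding E_def by (rule infsum_cmult_right'[symmetric])
    also have "\<dots> = infsum (\<lambda>m. exp (\<i> * z * of_int l0) * \<tau> a d (l0 + m) z) UNIV"
      by (rule infsum_reindex_bij_betw[symmetric, where g="\<lambda>m. l0 + m"])
         (auto intro!: bij_betwI[where g="\<lambda>m. m - l0"])
    also have "\<dots> = infsum (\<lambda>m. G (l0 - m)) UNIV"
    proof (rule infsum_cong)
      fix m :: int
      have e1: "exp (\<i> * z * of_int l0) * exp (- \<i> * z * of_int (l0 + m)) = exp (- \<i> * z * of_int m)"
        by (simp add: exp_add[symmetric] algebra_simps)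
      have e2: "exp (- \<i> * z * of_int l0) * exp (- \<i> * (- z) * of_int (l0 - m)) = exp (- \<i> * z * of_int m)"
        by (simp add: exp_add[symmetric] algebra_simps)
      have "G (l0 - m) = (\<Sum>c\<in>UNIV. \<Sum>b\<in>UNIV. complex_of_real (M $ a $ b * T (l0 - m) b 0 c * M $ d $ c))
            * exp (- \<i> * z * of_int m)"
        unfolding G_def \<tau>_def sum_distrib_right
        apply (rule sum.cong[OF refl])
        apply (rule sum.cong[OF refl])
        apply (rule aux_prod)
        apply (rule e2[symmetric])
        done
      also have "(\<Sum>c\<in>UNIV. \<Sum>b\<in>UNIV. complex_of_real (M $ a $ b * T (l0 - m) b 0 c * M $ d $ c))
          = complex_of_real (\<Sum>b\<in>UNIV. \<Sum>c\<in>UNIV. M $ a $ b * T (l0 - m) b 0 c * M $ d $ c)"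
        by (simp only: of_real_sum, rule sum.swap)
      also have "\<dots> = complex_of_real (T (l0 + m) a 0 d)"
        using sym[of a 0 m d] by simp
      finally have G: "G (l0 - m) = complex_of_real (T (l0 + m) a 0 d) * exp (- \<i> * z * of_int m)" .
      have "exp (\<i> * z * of_int l0) * \<tau> a d (l0 + m) z
          = complex_of_real (T (l0 + m) a 0 d) * (exp (\<i> * z * of_int l0) * exp (- \<i> * z * of_int (l0 + m)))"
        unfolding \<tau>_def by (simp only: mult_ac)
      also have "\<dots> = G (l0 - m)" by (simp only: e1 G)
      finally show "exp (\<i> * z * of_int l0) * \<tau> a d (l0 + m) z = G (l0 - m)" .
    qed
    also have "\<dots> = infsum G UNIV"
      by (rule infsum_reindex_bij_betw[where g="\<lambda>m. l0 - m"])
         (auto intro!: bij_betwI[where g="\<lambda>m. l0 - m"])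
    also have "\<dots> = (\<Sum>c\<in>UNIV. \<Sum>b\<in>UNIV. infsum (\<lambda>l.
        complex_of_real (M $ a $ b * M $ d $ c) * exp (- \<i> * z * of_int l0) * \<tau> b c l (- z)) UNIV)"
      unfolding G_def
      by (subst infsum_sum_fun[OF _ summ2], simp) (intro sum.cong refl infsum_sum_fun summ1, auto)
    also have "\<dots> = (\<Sum>c\<in>UNIV. (\<Sum>b\<in>UNIV. complex_of_real (M $ a $ b) * (exp (- \<i> * z * of_int l0) * E b c (- z)))
         * complex_of_real (M $ d $ c))"
      unfolding E_def sum_distrib_right
      by (intro sum.cong refl) (simp add: infsum_cmult_right' infsum_cmult_left' mult_ac)
    finally show ?thesis .
  qed
  define K where "K = 2 * \<i> * of_int l0 * of_nat CARD('n)"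
  have feq: "Dz (- z) = exp (K * z) * Dz z" if zS: "z \<in> S" for z
  proof -
    define Mc where "Mc = (\<chi> i j. complex_of_real (M $ i $ j))"
    define c0 where "c0 = exp (\<i> * z * of_int l0)"
    define c1 where "c1 = exp (- \<i> * z * of_int l0)"
    have c01: "c0 * c1 = 1" unfolding c0_def c1_def by (simp add: exp_add[symmetric])
    have mat: "(\<chi> a d. c0 * E a d z) = Mc ** (\<chi> b c. c1 * E b c (- z)) ** transpose Mc"
      unfolding c0_def c1_def Mc_def
      by (simp add: vec_eq_iff matrix_matrix_mult_def transpose_def entry[OF zS])
    have "c0 ^ CARD('n) * Dz z = det Mc * (c1 ^ CARD('n) * Dz (- z)) * det Mc"
      using arg_cong[OF mat, of det] unfolding Dz_def
      by (simp add: det_scale' det_mul)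
    also have "det Mc * det Mc = 1"
      using det_orthogonal_matrix[OF orthM] unfolding Mc_def det_of_real_mat
      by (auto simp flip: of_real_mult)
    hence "det Mc * (c1 ^ CARD('n) * Dz (- z)) * det Mc = c1 ^ CARD('n) * Dz (- z)"
      by (simp add: mult_ac)
    finally have eq: "c0 ^ CARD('n) * Dz z = c1 ^ CARD('n) * Dz (- z)" .
    have "c0 ^ CARD('n) * (c0 ^ CARD('n) * Dz z) = c0 ^ CARD('n) * (c1 ^ CARD('n) * Dz (- z))"
      by (simp only: eq)
    also have "\<dots> = (c0 * c1) ^ CARD('n) * Dz (- z)"
      by (simp only: power_mult_distrib mult.assoc)
    also have "\<dots> = Dz (- z)" by (simp add: c01)
    finally have "c0 ^ CARD('n) * (c0 ^ CARD('n) * Dz z) = Dz (- z)" .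
    moreover have "c0 ^ CARD('n) * c0 ^ CARD('n) = exp (K * z)"
      unfolding c0_def K_def
      by (simp add: exp_of_nat_mult[symmetric] exp_add[symmetric] algebra_simps)
    ultimately show ?thesis by (metis mult.assoc)
  qed
  define D' where "D' = deriv Dz"
  have Dderiv: "(Dz has_field_derivative D' z) (at z)" if "z \<in> S" for z
    unfolding D'_def using holomorphic_derivI[OF Dhol openS that] .
  have rel: "- D' (- z) = exp (K * z) * K * Dz z + D' z * exp (K * z)" if zS: "z \<in> S" for z
  proof -
    have m1: "((\<lambda>w. - w) has_field_derivative -1) (at z)"
      by (auto intro!: derivative_eq_intros)
    have d1: "((\<lambda>w. Dz (- w)) has_field_derivative D' (- z) * -1) (at z)"
      by (rule DERIV_chain2[OF Dderiv[OF Sneg[OF zS]] m1])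
    have ex: "((\<lambda>w. exp (K * w)) has_field_derivative exp (K * z) * K) (at z)"
      by (auto intro!: derivative_eq_intros)
    have d2: "((\<lambda>w. exp (K * w) * Dz w) has_field_derivative
        exp (K * z) * K * Dz z + D' z * exp (K * z)) (at z)"
      by (rule DERIV_mult[OF ex Dderiv[OF zS]])
    have d3: "((\<lambda>w. exp (K * w) * Dz w) has_field_derivative D' (- z) * -1) (at z)"
      by (rule has_field_derivative_transform_within_open[OF d1 openS zS]) (use feq in auto)
    show ?thesis using DERIV_unique[OF d3 d2] by simp
  qed
  define hh where "hh = (\<lambda>k::real. D' (complex_of_real k) / Dz (complex_of_real k))"
  have Dnz: "Dz (complex_of_real k) \<noteq> 0" if "k \<in> {-pi..pi}" for k
    using assms(4) that by (simp add: bloch_eq Dz_def)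
  have hrel: "hh (- k) = - K - hh k" if k: "k \<in> {-pi..pi}" for k
  proof -
    define z where "z = complex_of_real k"
    have nz1: "Dz z \<noteq> 0" using Dnz[OF k] by (simp add: z_def)
    have ez: "exp (K * z) \<noteq> 0" by simp
    have f: "Dz (- z) = exp (K * z) * Dz z" using feq[OF Sreal] by (simp add: z_def)
    have r: "D' (- z) = - (exp (K * z) * K * Dz z + D' z * exp (K * z))"
      using rel[OF Sreal[of k]] unfolding z_def by (metis minus_minus)
    have "hh (- k) = D' (- z) / Dz (- z)" by (simp add: hh_def z_def)
    also have "\<dots> = - K - hh k"
      unfolding f r hh_def z_def[symmetric] using nz1 ez by (simp add: field_simps)
    finally show ?thesis .
  qed
  have vd: "vector_derivative (\<lambda>q. det (bloch T q)) (at k) = D' (complex_of_real k)" for k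
  proof -
    have "(\<lambda>q. det (bloch T q)) = (\<lambda>q. Dz (complex_of_real q))"
      by (simp add: bloch_eq Dz_def)
    moreover have "Dz field_differentiable at (complex_of_real k)"
      using Dhol openS Sreal holomorphic_on_imp_differentiable_at by blast
    ultimately show ?thesis unfolding D'_def by (simp add: vector_derivative_of_real_right)
  qed
  have w: "winding_w0 T = integral {-pi..pi} hh / (2 * pi * \<i>)"
    unfolding winding_w0_def hh_def vd by (simp add: bloch_eq Dz_def)
  have contD': "continuous_on S D'"
    unfolding D'_def by (intro holomorphic_on_imp_continuous_on holomorphic_deriv Dhol openS)
  have contDz: "continuous_on S Dz"
    by (intro holomorphic_on_imp_continuous_on Dhol)
  have sub: "complex_of_real ` {-pi..pi} \<subseteq> S" using Sreal by auto
  have conthh: "continuous_on {-pi..pi} hh"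
    unfolding hh_def
    by (intro continuous_on_divide continuous_on_compose2[OF contD' _ sub]
          continuous_on_compose2[OF contDz _ sub] continuous_intros)
       (use Dnz in auto)
  define I where "I = integral {-pi..pi} hh"
  have hI: "(hh has_integral I) {-pi..pi}"
    unfolding I_def using conthh integrable_continuous_real by blast
  have h1: "((\<lambda>k. hh (- k)) has_integral I) {-pi..pi}"
    using hI has_integral_reflect_real[of hh I pi "-pi"] by simp
  have h2: "((\<lambda>k. - K - hh k) has_integral ((pi - - pi) *\<^sub>R (- K) - I)) {-pi..pi}"
  proof (rule has_integral_diff[OF _ hI])
    show "((\<lambda>k. - K) has_integral (pi - - pi) *\<^sub>R (- K)) {-pi..pi}"
      using has_integral_const_real[of "- K" "-pi" pi] by simp
  qed
  have h3: "((\<lambda>k. hh (- k)) has_integral ((pi - - pi) *\<^sub>R (- K) - I)) {-pi..pi}"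
    using h2 has_integral_cong[of "{-pi..pi}" "\<lambda>k. hh (- k)" "\<lambda>k. - K - hh k"] hrel by simp
  have "I = (pi - - pi) *\<^sub>R (- K) - I" using has_integral_unique[OF h1 h3] .
  from final_alg[OF this K_def] show ?thesis unfolding w I_def[symmetric] by simp
qed

end
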